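(* Let $1\le l\le r$ and consider a canonical noiseless MMV model $B=AX$ in which $A$ satisfies $0\le \delta^L_{2k-r+l}(A)<1$ and the nonzero rows of $X$ are in general position. Let $I\subset\{1,\dots,n\}$ be an index set with $|I|\le \min(2(k-r)+l,\,k)$ and $|I\setminus \operatorname{supp}X|\le k-r+l$. Then the following are equivalent: (i) $|I\cap \operatorname{supp}X|\ge k-r+1$; (ii) $\operatorname{rank}[A_I~B]<|I|+r$.
   Context: Canonical MMV setting: $m,n,r,k$ are positive integers with $r\le m<n$ and $r\le k$. $A\in\mathbb{R}^{m\times n}$ is the sensing matrix with columns $\mathbf a_1,\dots,\mathbf a_n$; $X\in\mathbb{R}^{n\times r}$ has rows $\mathbf x^1,\dots,\mathbf x^n$, $\operatorname{supp}X=\{i:\mathbf x^i\neq 0\}$ and $|\operatorname{supp}X|=k$; $B=AX\in\mathbb{R}^{m\times r}$ has full column rank $r$. For an index set $I$, $A_I$ is the submatrix of $A$ formed by the columns indexed by $I$, and $[A_I~B]$ denotes horizontal concatenation. The lower restricted isometry constant $\delta^L_s(A)$ is the smallest $\delta\ge0$ such that $(1-\delta)\|\mathbf x\|_2^2\le\|A\mathbf x\|_2^2$ for all $\mathbf x\in\mathbb{R}^n$ with at most $s$ nonzero entries; thus $\delta^L_s(A)<1$ means every $s$ columns of $A$ are linearly independent. "The nonzero rows of $X$ are in general position" means any $r$ of the $k$ nonzero rows of $X$ (vectors in $\mathbb{R}^r$) are linearly independent. *)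

theory Defs
  imports "HOL-Analysis.Analysis"
begin

definition supp_rows :: "real^'r^'n \<Rightarrow> 'n set" where
  "supp_rows X = {i. row i X \<noteq> 0}"

definition lower_ric :: "nat \<Rightarrow> real^'n^'m \<Rightarrow> real" where
  "lower_ric s A = Inf {\<delta>. \<delta> \<ge> 0 \<and>
      (\<forall>x::real^'n. card {i. x $ i \<noteq> 0} \<le> s \<longrightarrow>
          (1 - \<delta>) * (norm x)^2 \<le> (norm (A *v x))^2)}"

text \<open>Nonzero rows of X in general position: any r (= number of columns) of them
  are linearly independent (as a family, i.e. distinct and independent).\<close>
definition rows_general_position :: "real^'r^'n \<Rightarrow> bool" where
  "rows_general_position X \<longleftrightarrow>
     (\<forall>S \<subseteq> supp_rows X. card S = CARD('r) \<longrightarrow>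
        inj_on (\<lambda>i. row i X) S \<and> independent ((\<lambda>i. row i X) ` S))"

definition rank_concat :: "real^'n^'m \<Rightarrow> 'n set \<Rightarrow> real^'r^'m \<Rightarrow> nat" where
  "rank_concat A I B = dim ((\<lambda>i. column i A) ` I \<union> columns B)"

end

theory Submission
  imports Defs
begin


lemma row_eq: "row i X = X $ i"
  by (simp add: row_def vec_eq_iff)

lemma ric_kernel:
  fixes A :: "real^'n^'m" and x :: "real^'n"
  assumes "lower_ric s A < 1" "card {i. x$i \<noteq> 0} \<le> s" "A *v x = 0"
  shows "x = 0"
proof -
  let ?D = "{\<delta>. \<delta> \<ge> 0 \<and>
      (\<forall>x::real^'n. card {i. x $ i \<noteq> 0} \<le> s \<longrightarrow>
          (1 - \<delta>) * (norm x)^2 \<le> (norm (A *v x))^2)}"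
  have "1 \<in> ?D" by simp
  hence ne: "?D \<noteq> {}" by blast
  have bdd: "bdd_below ?D" by (rule bdd_belowI[of _ 0]) simp
  from assms(1) have "Inf ?D < 1" by (simp add: lower_ric_def)
  then obtain d where d: "d \<in> ?D" "d < 1" using cInf_less_iff[OF ne bdd] by blast
  hence "(1 - d) * (norm x)^2 \<le> 0" using assms(2,3) by auto
  moreover have "1 - d > 0" using d by simp
  ultimately have "(norm x)^2 \<le> 0"
    by (simp add: mult_le_0_iff)
  thus ?thesis by simp
qed

lemma gp_zero:
  fixes X :: "real^'r^'n" and z :: "real^'r"
  assumes "rows_general_position X" "R \<subseteq> supp_rows X" "card R = CARD('r)"
    "\<forall>i\<in>R. row i X \<bullet> z = 0"
  shows "z = 0"
proof -
  let ?V = "(\<lambda>i. row i X) ` R"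
  have ii: "inj_on (\<lambda>i. row i X) R" "independent ?V"
    using assms(1,2,3) unfolding rows_general_position_def by auto
  have "card ?V = CARD('r)" using ii(1) assms(3) card_image by metis
  hence "UNIV \<subseteq> span ?V"
    using eucl.card_ge_dim_independent[of ?V UNIV] ii(2) by simp
  hence "z \<in> span ?V" by blast
  hence "orthogonal z z"
    by (rule orthogonal_to_span) (use assms(4) in \<open>auto simp: orthogonal_def inner_commute\<close>)
  thus ?thesis using orthogonal_self by blast
qed

lemma Av_span:
  fixes A :: "real^'n^'m" and v :: "real^'n"
  assumes "\<forall>i. i \<notin> I \<longrightarrow> v $ i = 0" "(\<lambda>i. column i A) ` I \<subseteq> T"
  shows "A *v v \<in> span T"
  unfolding matrix_mult_sum scalar_mult_eq_scaleR
proof (rule span_sum)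
  fix i :: 'n
  show "v $ i *\<^sub>R column i A \<in> span T"
  proof (cases "i \<in> I")
    case True thus ?thesis using assms(2) by (meson image_subset_iff span_base span_scale)
  next
    case False thus ?thesis using assms(1) by (simp add: span_zero)
  qed
qed



theorem theorem1:
  fixes A :: "real^'n^'m" and X :: "real^'r^'n" and B :: "real^'r^'m"
    and k l :: nat and I :: "'n set"
  assumes "CARD('r) \<le> CARD('m)" and "CARD('m) < CARD('n)"
    and "CARD('r) \<le> k"
    and "card (supp_rows X) = k"
    and "B = A ** X"
    and "rank B = CARD('r)"
    and "1 \<le> l" and "l \<le> CARD('r)"
    and "0 \<le> lower_ric (2 * k - CARD('r) + l) A"
    and "lower_ric (2 * k - CARD('r) + l) A < 1"
    and "rows_general_position X"
    and "card I \<le> min (2 * (k - CARD('r)) + l) k"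
    and "card (I - supp_rows X) \<le> k - CARD('r) + l"
  shows "card (I \<inter> supp_rows X) \<ge> k - CARD('r) + 1 \<longleftrightarrow>
         rank_concat A I B < card I + CARD('r)"
proof -
  define S where "S = supp_rows X"
  define r where "r = CARD('r)"
  define T where "T = (\<lambda>i. column i A) ` I \<union> columns B"
  have rpos: "r \<ge> 1" unfolding r_def by (simp add: Suc_leI)
  have cS: "card S = card (S \<inter> I) + card (S - I)"
    by (rule card_Int_Diff) simp
  have iff1: "card (I \<inter> S) \<ge> k - r + 1 \<longleftrightarrow> card (S - I) < r"
    using cS assms(3,4) rpos unfolding S_def r_def by (auto simp: Int_commute)
  have Xcomp: "(X *v z) $ i = row i X \<bullet> z" for z i
    by (simp add: matrix_vector_mul_component row_eq)
  have Xout: "row i X = 0" if "i \<notin> S" for i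
    using that unfolding S_def supp_rows_def by auto
  have rk: "rank_concat A I B = dim T" unfolding rank_concat_def T_def by simp
  have colB: "B *v z \<in> span T" for z
    unfolding matrix_mult_sum scalar_mult_eq_scaleR
  proof (rule span_sum)
    fix j :: 'r
    have "column j B \<in> T" unfolding T_def columns_def by blast
    thus "z $ j *\<^sub>R column j B \<in> span T" by (meson span_base span_scale)
  qed
  show ?thesis
    unfolding rk S_def[symmetric] r_def[symmetric] iff1
  proof
    assume small: "card (S - I) < r"
    let ?R = "(\<lambda>i. row i X) ` (S - I)"
    have "dim ?R \<le> card ?R" by (rule dim_le_card') simp
    also have "\<dots> \<le> card (S - I)" by (rule card_image_le) simp
    finally have "dim ?R < DIM(real^'r)" using small unfolding r_def by simp
    then obtain y :: "real^'r" where y: "y \<noteq> 0" "\<And>w. w \<in> span ?R \<Longrightarrow> orthogonal y w"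
      by (rule orthogonal_to_subspace_exists) blast
    define v where "v = X *v y"
    have vI: "\<forall>i. i \<notin> I \<longrightarrow> v $ i = 0"
    proof (intro allI impI)
      fix i assume "i \<notin> I"
      show "v $ i = 0"
      proof (cases "i \<in> S")
        case True
        hence "row i X \<in> span ?R" using \<open>i \<notin> I\<close> by (intro span_base) auto
        hence "orthogonal y (row i X)" by (rule y(2))
        thus ?thesis unfolding v_def Xcomp by (simp add: orthogonal_def inner_commute)
      next
        case False thus ?thesis unfolding v_def Xcomp using Xout by simp
      qed
    qed
    have By: "B *v y = A *v v" unfolding v_def assms(5) by (simp add: matrix_vector_mul_assoc)
    obtain j where j: "y $ j \<noteq> 0" using y(1) by (metis vec_eq_iff zero_index)
    define T' where "T' = (\<lambda>i. column i A) ` I \<union> (\<lambda>j'. column j' B) ` (UNIV - {j})"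
    have Av: "A *v v \<in> span T'" by (rule Av_span[OF vI]) (auto simp: T'_def)
    have rest: "(\<Sum>i\<in>UNIV - {j}. y $ i *\<^sub>R column i B) \<in> span T'"
    proof (rule span_sum)
      fix i assume "i \<in> UNIV - {j}"
      hence "column i B \<in> T'" unfolding T'_def by blast
      thus "y $ i *\<^sub>R column i B \<in> span T'" by (meson span_base span_scale)
    qed
    have "B *v y = y $ j *\<^sub>R column j B + (\<Sum>i\<in>UNIV - {j}. y $ i *\<^sub>R column i B)"
      unfolding matrix_mult_sum scalar_mult_eq_scaleR
      by (simp add: sum.remove[of UNIV j])
    hence "y $ j *\<^sub>R column j B = A *v v - (\<Sum>i\<in>UNIV - {j}. y $ i *\<^sub>R column i B)"
      using By by simp
    hence "y $ j *\<^sub>R column j B \<in> span T'" using Av rest by (simp add: span_diff)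
    hence "(1 / y $ j) *\<^sub>R (y $ j *\<^sub>R column j B) \<in> span T'" by (rule span_scale)
    hence cj: "column j B \<in> span T'" using j by simp
    have TT: "T \<subseteq> span T'"
    proof
      fix w assume "w \<in> T"
      then consider (a) "w \<in> (\<lambda>i. column i A) ` I" | (b) j' where "w = column j' B"
        unfolding T_def columns_def by blast
      thus "w \<in> span T'"
      proof cases
        case a thus ?thesis unfolding T'_def by (intro span_base) blast
      next
        case b thus ?thesis
          using cj by (cases "j' = j") (auto simp: T'_def intro: span_base)
      qed
    qed
    have "dim T \<le> card T'" by (rule dim_le_card[OF TT]) (simp add: T'_def)
    also have "\<dots> \<le> card ((\<lambda>i. column i A) ` I) + card ((\<lambda>j'. column j' B) ` (UNIV - {j}))"
      unfolding T'_def by (rule card_Un_le)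
    also have "\<dots> \<le> card I + card (UNIV - {j})"
      by (intro add_mono card_image_le) auto
    also have "\<dots> < card I + r" using rpos unfolding r_def by (simp add: card_Diff_singleton)
    finally show "dim T < card I + r" .
  next
    assume lt: "dim T < card I + r"
    show "card (S - I) < r"
    proof (rule ccontr)
      assume "\<not> card (S - I) < r"
      hence "r \<le> card (S - I)" by simp
      then obtain R where R: "R \<subseteq> S - I" "card R = r" by (meson obtain_subset_with_card_n)
      show False
      proof -
        define f where "f = (\<lambda>p::(real^'n) \<times> (real^'r). A *v fst p + B *v snd p)"
        have lf: "linear f" unfolding f_def
          by (intro linearI) (auto simp: matrix_vector_right_distrib matrix_vector_mult_scaleR scaleR_add_right)
        define d where "d = (\<lambda>i. (axis i (1::real), 0::real^'r)) ` I \<union> (\<lambda>j. (0::real^'n, axis j (1::real))) ` UNIV"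
        define W where "W = {x::(real^'n) \<times> (real^'r). \<forall>i\<in>Basis. i \<notin> d \<longrightarrow> x \<bullet> i = 0}"
        have dB: "d \<subseteq> Basis" unfolding d_def Basis_prod_def by (auto simp: axis_in_Basis_iff)
        have cd: "card d = card I + r"
        proof -
          have "card d = card ((\<lambda>i. (axis i (1::real), 0::real^'r)) ` I) + card ((\<lambda>j. (0::real^'n, axis j (1::real))) ` (UNIV::'r set))"
            unfolding d_def by (rule card_Un_disjoint) (auto simp: axis_eq_axis)
          also have "\<dots> = card I + r" unfolding r_def
            by (subst card_image, auto simp: inj_on_def axis_eq_axis)+
          finally show ?thesis .
        qed
        have dimW: "dim W = card I + r" unfolding W_def using dim_substandard[OF dB] cd by simp
        have subW: "subspace W" unfolding W_def by (rule subspace_substandard)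
        have memW: "(c, z) \<in> W \<longleftrightarrow> (\<forall>i. i \<notin> I \<longrightarrow> c $ i = 0)" for c z
        proof
          assume "(c, z) \<in> W"
          thus "\<forall>i. i \<notin> I \<longrightarrow> c $ i = 0"
          proof (intro allI impI)
            fix i assume cz: "(c, z) \<in> W" and i: "i \<notin> I"
            have "(axis i 1, 0) \<in> (Basis :: ((real^'n) \<times> (real^'r)) set)"
              unfolding Basis_prod_def by (auto simp: axis_in_Basis_iff)
            moreover have "(axis i (1::real), 0::real^'r) \<notin> d" using i unfolding d_def by (auto simp: axis_eq_axis)
            ultimately have "(c, z) \<bullet> (axis i 1, 0) = 0" using cz unfolding W_def by blast
            thus "c $ i = 0" by (simp add: inner_Pair inner_axis)
          qed
        next
          assume c: "\<forall>i. i \<notin> I \<longrightarrow> c $ i = 0"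
          show "(c, z) \<in> W" unfolding W_def mem_Collect_eq
          proof (intro ballI impI)
            fix b :: "(real^'n) \<times> (real^'r)" assume b: "b \<in> Basis" "b \<notin> d"
            then consider (a) u where "u \<in> Basis" "b = (u, 0)" | (bb) u where "u \<in> Basis" "b = (0, u)"
              unfolding Basis_prod_def by blast
            thus "(c, z) \<bullet> b = 0"
            proof cases
              case a
              then obtain i where u: "u = axis i 1" using axis_inverse by blast
              have "i \<notin> I" using b(2) a u unfolding d_def by auto
              thus ?thesis using a u c by (simp add: inner_Pair inner_axis)
            next
              case bb
              then obtain j where "u = axis j 1" using axis_inverse by blast
              hence False using b(2) bb unfolding d_def by auto
              thus ?thesis ..
            qed
          qed
        qed
        have ker: "p = 0" if "p \<in> W" "f p = 0" for p
        proof -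
          obtain c z where p: "p = (c, z)" by (cases p)
          have cI: "\<forall>i. i \<notin> I \<longrightarrow> c $ i = 0" using that(1) memW p by blast
          define v where "v = c + X *v z"
          have Av: "A *v v = 0" using that(2) unfolding v_def f_def p assms(5)
            by (simp add: matrix_vector_right_distrib matrix_vector_mul_assoc)
          have "{i. v $ i \<noteq> 0} \<subseteq> (I - S) \<union> S"
          proof
            fix i assume "i \<in> {i. v $ i \<noteq> 0}"
            thus "i \<in> (I - S) \<union> S" using cI Xout[of i] unfolding v_def by (auto simp: Xcomp)
          qed
          hence "card {i. v $ i \<noteq> 0} \<le> card ((I - S) \<union> S)" by (rule card_mono[rotated]) simp
          also have "\<dots> = card (I - S) + card S" by (rule card_Un_disjoint) auto
          also have "\<dots> \<le> 2 * k - r + l"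
            using assms(3,4,13) unfolding S_def r_def by simp
          finally have v0: "v = 0" using ric_kernel[OF assms(10)[folded r_def] _ Av] by blast
          have "\<forall>i\<in>R. row i X \<bullet> z = 0"
          proof
            fix i assume "i \<in> R"
            hence "i \<notin> I" using R by blast
            hence "c $ i = 0" using cI by blast
            moreover have "v $ i = 0" using v0 by simp
            ultimately show "row i X \<bullet> z = 0" unfolding v_def by (simp add: Xcomp)
          qed
          hence z0: "z = 0" using gp_zero[OF assms(11), of R z] R unfolding S_def r_def by blast
          hence "c = 0" using v0 unfolding v_def by simp
          thus ?thesis using z0 p by (simp add: zero_prod_def)
        qed
        have inj: "inj_on f (span W)"
          unfolding span_eq_iff[THEN iffD2, OF subW]
        proof (rule inj_onI)
          fix x y assume xy: "x \<in> W" "y \<in> W" "f x = f y"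
          have "x - y \<in> W" using subW xy by (simp add: subspace_diff)
          moreover have "f (x - y) = 0" using xy(3) linear_diff[OF lf] by simp
          ultimately show "x = y" using ker by fastforce
        qed
        have "dim (f ` W) = card I + r" using eucl.dim_image_eq[OF lf inj] dimW by simp
        moreover have "f ` W \<subseteq> span T"
        proof
          fix w assume "w \<in> f ` W"
          then obtain c z where cz: "(c, z) \<in> W" "w = f (c, z)" by auto
          have "A *v c \<in> span T" by (rule Av_span) (use cz memW in \<open>auto simp: T_def\<close>)
          thus "w \<in> span T" using cz colB unfolding f_def by (simp add: span_add)
        qed
        hence "dim (f ` W) \<le> dim T" by (metis dim_subset dim_span)
        ultimately show False using lt by simp
      qed
    qed
  qed
qed

end
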